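(* Let $X$ be a countable set, let $w$ be an essentially locally finite weight on $X$ generating a metric $\delta=\delta_w$, let $x\in X$ and let $R>0$. Let $\mathcal P\subseteq\{\gamma\in\Pi(X)\mid \gamma(0)=x,\ l_w(\gamma)<R\}$ be an infinite set of finite paths. Then there exists an infinite path $\gamma_\infty\in\Pi_\infty(X)$ with $l_w(\gamma_\infty)\le R$ such that for every $n\in\mathbb N$ there exist infinitely many paths $\gamma\in\mathcal P$ with $\gamma(k)=\gamma_\infty(k)$ for $k=0,\dots,n$.
   Context: $\Pi(X)$ is the set of injective maps $\gamma:\{0,\dots,n\}\to X$, $n\in\mathbb N_0$ (finite paths, identified with $(\gamma(0),\dots,\gamma(n))$), and $\Pi_\infty(X)$ is the set of injective maps $\gamma:\mathbb N_0\to X$ (infinite paths). A weight on $X$ is a symmetric function $w:X\times X\to[0,\infty]$ with $w(x,y)=0$ iff $x=y$; it is essentially locally finite if $\#\{y\in X\mid w(x,y)<R\}<\infty$ for all $x\in X$, $R>0$. The $w$-length of $\gamma=(x_0,\dots,x_n)$ is $l_w(\gamma)=\sum_{i=1}^n w(x_{i-1},x_i)$, and of an infinite path $(x_0,x_1,\dots)$ it is $\sum_{i=1}^\infty w(x_{i-1},x_i)$. $\delta_w(x,y):=\inf\{l_w(\gamma)\mid\gamma\text{ a path from }x\text{ to }y\}$. *)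

theory Defs
  imports "HOL-Analysis.Analysis" "HOL-Library.Extended_Nonnegative_Real"
begin

definition is_weight :: "'a set \<Rightarrow> ('a \<Rightarrow> 'a \<Rightarrow> ennreal) \<Rightarrow> bool" where
  "is_weight X w \<longleftrightarrow> (\<forall>x\<in>X. \<forall>y\<in>X. w x y = w y x \<and> (w x y = 0 \<longleftrightarrow> x = y))"

definition ess_locally_finite :: "'a set \<Rightarrow> ('a \<Rightarrow> 'a \<Rightarrow> ennreal) \<Rightarrow> bool" where
  "ess_locally_finite X w \<longleftrightarrow>
     (\<forall>x\<in>X. \<forall>R::real. R > 0 \<longrightarrow> finite {y\<in>X. w x y < ennreal R})"

definition fin_path :: "'a set \<Rightarrow> 'a list \<Rightarrow> bool" where
  "fin_path X p \<longleftrightarrow> p \<noteq> [] \<and> distinct p \<and> set p \<subseteq> X"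

definition inf_path :: "'a set \<Rightarrow> (nat \<Rightarrow> 'a) \<Rightarrow> bool" where
  "inf_path X g \<longleftrightarrow> inj g \<and> range g \<subseteq> X"

definition path_len :: "('a \<Rightarrow> 'a \<Rightarrow> ennreal) \<Rightarrow> 'a list \<Rightarrow> ennreal" where
  "path_len w p = (\<Sum>i\<in>{1..<length p}. w (p ! (i - 1)) (p ! i))"

definition inf_path_len :: "('a \<Rightarrow> 'a \<Rightarrow> ennreal) \<Rightarrow> (nat \<Rightarrow> 'a) \<Rightarrow> ennreal" where
  "inf_path_len w g = (\<Sum>i. w (g i) (g (Suc i)))"

definition path_metric :: "'a set \<Rightarrow> ('a \<Rightarrow> 'a \<Rightarrow> ennreal) \<Rightarrow> 'a \<Rightarrow> 'a \<Rightarrow> ennreal" where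
  "path_metric X w x y =
     Inf {path_len w p | p. fin_path X p \<and> hd p = x \<and> last p = y}"

definition generates_metric :: "'a set \<Rightarrow> ('a \<Rightarrow> 'a \<Rightarrow> ennreal) \<Rightarrow> bool" where
  "generates_metric X w \<longleftrightarrow>
     (\<forall>x\<in>X. \<forall>y\<in>X. path_metric X w x y < \<infinity>
        \<and> (path_metric X w x y = 0 \<longleftrightarrow> x = y)
        \<and> path_metric X w x y = path_metric X w y x
        \<and> (\<forall>z\<in>X. path_metric X w x z \<le> path_metric X w x y + path_metric X w y z))"

end

theory Submission
  imports Defs
begin

lemma step_le_len:
  assumes "1 \<le> i" "i < length p"
  shows "w (p ! (i - 1)) (p ! i) \<le> path_len w p"
  unfolding path_len_def
  by (rule member_le_sum[where f="\<lambda>i. w (p ! (i - 1)) (p ! i)"]) (use assms in auto)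

lemma prefix_le_len:
  assumes "n < length p"
  shows "(\<Sum>i<n. w (p ! i) (p ! Suc i)) \<le> path_len w p"
proof -
  have "(\<Sum>i<n. w (p ! i) (p ! Suc i)) = (\<Sum>i\<in>{1..<Suc n}. w (p ! (i - 1)) (p ! i))"
  proof -
    have "(\<Sum>i\<in>{1..<Suc n}. w (p ! (i - 1)) (p ! i)) = (\<Sum>i\<in>Suc ` {..<n}. w (p ! (i - 1)) (p ! i))"
      by (rule sum.cong) (simp_all add: image_Suc_lessThan atLeastLessThanSuc_atLeastAtMost)
    also have "\<dots> = (\<Sum>i<n. w (p ! i) (p ! Suc i))"
      by (subst sum.reindex) auto
    finally show ?thesis by simp
  qed
  also have "\<dots> \<le> path_len w p"
    unfolding path_len_def
    by (rule sum_mono2) (use assms in auto)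
  finally show ?thesis .
qed

theorem lemma2p3:
  fixes X :: "'a set" and w :: "'a \<Rightarrow> 'a \<Rightarrow> ennreal" and x :: 'a and R :: real
    and P :: "'a list set"
  assumes "countable X"
    and "is_weight X w"
    and "ess_locally_finite X w"
    and "generates_metric X w"
    and "x \<in> X"
    and "R > 0"
    and "P \<subseteq> {p. fin_path X p \<and> hd p = x \<and> path_len w p < ennreal R}"
    and "infinite P"
  shows "\<exists>g. inf_path X g \<and> inf_path_len w g \<le> ennreal R \<and>
           (\<forall>n::nat. infinite {p\<in>P. n < length p \<and> (\<forall>k\<le>n. p ! k = g k)})"
proof -
  note PP = assms(7)
  define good where "good l \<longleftrightarrow> infinite {p\<in>P. take (length l) p = l}" for l
  have good0: "good [x]"
  proof -
    have "{p\<in>P. take (length [x]) p = [x]} = P"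
      using PP by (auto simp: fin_path_def take_Suc neq_Nil_conv)
    thus ?thesis using assms(8) by (simp add: good_def)
  qed
  have ext: "\<exists>y. good (l @ [y])" if gl: "good l" and ln: "l \<noteq> []" for l
  proof (rule ccontr)
    assume nex: "\<not> ?thesis"
    define S where "S = {y\<in>X. w (last l) y < ennreal R}"
    obtain p0 where p0: "p0 \<in> P" "take (length l) p0 = l"
      using gl unfolding good_def using not_finite_existsD by blast
    have lX: "last l \<in> X"
    proof -
      have "last l \<in> set l" using ln by simp
      also have "set l \<subseteq> set p0" using set_take_subset[of "length l" p0] p0(2) by simp
      finally show ?thesis using p0(1) PP by (auto simp: fin_path_def)
    qed
    have fS: "finite S" using assms(3) lX assms(6) unfolding S_def ess_locally_finite_def by blast
    have sub: "{p\<in>P. take (length l) p = l} \<subseteq> {l} \<union> (\<Union>y\<in>S. {p\<in>P. take (length (l @ [y])) p = l @ [y]})"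
    proof
      fix p assume pin: "p \<in> {p\<in>P. take (length l) p = l}"
      show "p \<in> {l} \<union> (\<Union>y\<in>S. {p\<in>P. take (length (l @ [y])) p = l @ [y]})"
      proof (cases "length p = length l")
        case True thus ?thesis using pin by auto
      next
        case False
        have lp: "length l < length p"
        proof (rule ccontr)
          assume "\<not> ?thesis"
          hence "take (length l) p = p" by simp
          hence "p = l" using pin by simp
          thus False using False by simp
        qed
        have fp: "fin_path X p" "path_len w p < ennreal R" using pin PP by auto
        have tk: "take (Suc (length l)) p = l @ [p ! length l]"
          using pin lp by (auto simp: take_Suc_conv_app_nth)
        have "last l = take (length l) p ! (length l - 1)" using pin ln by (simp add: last_conv_nth)
        hence lst: "p ! (length l - 1) = last l" using ln by simp
        have "w (last l) (p ! length l) \<le> path_len w p"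
          using step_le_len[of "length l" p w] lp ln lst by (simp add: Suc_le_eq)
        hence "w (last l) (p ! length l) < ennreal R" using fp by simp
        moreover have "p ! length l \<in> X" using fp lp by (auto simp: fin_path_def)
        ultimately have "p ! length l \<in> S" by (simp add: S_def)
        thus ?thesis using tk pin by auto
      qed
    qed
    have "finite ({l} \<union> (\<Union>y\<in>S. {p\<in>P. take (length (l @ [y])) p = l @ [y]}))"
      using fS nex by (auto simp: good_def)
    hence "finite {p\<in>P. take (length l) p = l}" using sub finite_subset by blast
    thus False using gl by (simp add: good_def)
  qed
  define f where "f = rec_nat [x] (\<lambda>n l. l @ [SOME y. good (l @ [y])])"
  have f0: "f 0 = [x]" and fS: "f (Suc n) = f n @ [SOME y. good (f n @ [y])]" for n
    by (simp_all add: f_def)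
  have fgood: "good (f n) \<and> length (f n) = Suc n" for n
  proof (induction n)
    case 0 thus ?case using good0 f0 by simp
  next
    case (Suc n)
    hence "f n \<noteq> []" by auto
    hence "good (f n @ [SOME y. good (f n @ [y])])"
      using ext Suc by (meson someI_ex)
    thus ?case using Suc fS by simp
  qed
  have fpre: "take (Suc n) (f m) = f n" if "n \<le> m" for n m
    using that
  proof (induction m)
    case 0 thus ?case using fgood[of 0] by simp
  next
    case (Suc m)
    show ?case
    proof (cases "n = Suc m")
      case True thus ?thesis using fgood[of "Suc m"] by simp
    next
      case False
      hence "n \<le> m" using Suc by simp
      thus ?thesis using Suc fS fgood[of m] by simp
    qed
  qed
  define g where "g k = f k ! k" for k
  have gf: "f n ! k = g k" if "k \<le> n" for k n
  proof -
    have "f k = take (Suc k) (f n)" using fpre that by simp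
    hence "f k ! k = f n ! k" by simp
    thus ?thesis by (simp add: g_def)
  qed
  have inf: "infinite {p\<in>P. n < length p \<and> (\<forall>k\<le>n. p ! k = g k)}" for n
  proof -
    have "{p\<in>P. take (length (f n)) p = f n} \<subseteq> {p\<in>P. n < length p \<and> (\<forall>k\<le>n. p ! k = g k)}"
    proof safe
      fix p assume "p \<in> P" "take (length (f n)) p = f n"
      hence t: "take (Suc n) p = f n" using fgood[of n] by simp
      have "length (take (Suc n) p) \<le> length p" by simp
      hence "length (f n) \<le> length p" using t by simp
      thus "n < length p" using fgood[of n] by simp
      fix k assume "k \<le> n"
      hence "p ! k = take (Suc n) p ! k" by simp
      thus "p ! k = g k" using t gf \<open>k \<le> n\<close> by simp
    qed
    thus ?thesis using fgood[of n] unfolding good_def using finite_subset by blast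
  qed
  have getp: "\<exists>p\<in>P. n < length p \<and> (\<forall>k\<le>n. p ! k = g k)" for n
    using not_finite_existsD[OF inf[of n]] by blast
  have inj: "inf_path X g"
    unfolding inf_path_def
  proof
    show "inj g"
    proof (rule linorder_injI)
      fix i j :: nat assume ij: "i < j"
      obtain p where p: "p \<in> P" "j < length p" "\<forall>k\<le>j. p ! k = g k" using getp by blast
      have "distinct p" using p PP by (auto simp: fin_path_def)
      hence "p ! i \<noteq> p ! j" using ij p(2) by (simp add: nth_eq_iff_index_eq)
      thus "g i \<noteq> g j" using p(3) ij by auto
    qed
    show "range g \<subseteq> X"
    proof
      fix y assume "y \<in> range g"
      then obtain k where k: "y = g k" by blast
      obtain p where p: "p \<in> P" "k < length p" "\<forall>j\<le>k. p ! j = g j" using getp by blast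
      have "p ! k \<in> set p" using p(2) by simp
      hence "p ! k \<in> X" using p(1) PP by (auto simp: fin_path_def)
      thus "y \<in> X" using k p by simp
    qed
  qed
  have len: "inf_path_len w g \<le> ennreal R"
    unfolding inf_path_len_def
  proof (rule suminf_le_const)
    show "summable (\<lambda>i. w (g i) (g (Suc i)))" by simp
    fix n
    obtain p where p: "p \<in> P" "n < length p" "\<forall>k\<le>n. p ! k = g k" using getp by blast
    have "(\<Sum>i<n. w (g i) (g (Suc i))) = (\<Sum>i<n. w (p ! i) (p ! Suc i))"
      using p(3) by (intro sum.cong) auto
    also have "\<dots> \<le> path_len w p" using prefix_le_len p(2) by blast
    also have "\<dots> \<le> ennreal R" using p(1) PP by (auto intro: less_imp_le)
    finally show "(\<Sum>i<n. w (g i) (g (Suc i))) \<le> ennreal R" .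
  qed
  show ?thesis using inj len inf by blast
qed

end
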